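(* Let $\mathcal{C}$ be a category with finite products that has an exponentiable parametrised natural numbers object $N$. (1) A midpoint object $(A,m)$ in $\mathcal{C}$ is iterative if and only if there exists a map $M\colon A^N\to A$ satisfying (Unfolding) $M_i\,x_i = m(x_0, M_i\,x_{i+1})$, and (Canonicity) whenever $(x_i)$ and $(y_i)$ are sequences with $y_i=m(x_i,y_{i+1})$ for all $i$, then $y_0=M_i\,x_i$. Moreover, if $(A,m)$ is iterative then there is a unique map $M\colon A^N\to A$ satisfying Unfolding. (2) If $(A,m)$ and $(A',m')$ are iterative midpoint objects with associated maps $M, M'$ (the unique ones satisfying Unfolding), then every midpoint homomorphism $f\colon A\to A'$ satisfies $f(M_i\,x_i)=M'_i\,f(x_i)$ for all sequences $(x_i)$.
   Context: All equations are between generalised elements (maps into the object from an arbitrary object $Z$); sequences $(x_i)$ of generalised elements of $A$ mean generalised elements of $A^N$, and $M_i\,x_i$ denotes $M((x_i))$. A parametrised natural numbers object is an object $N$ with $0\colon 1\to N$, $s\colon N\to N$ such that for all objects $P,X$ and maps $a\colon P\to X$, $f\colon P\times X\to X$ there is a unique $g\colon P\times N\to X$ with $g(p,0)=a(p)$, $g(p,n+1)=f(p,g(p,n))$. A midpoint object is a pair $(A,m)$ with $m\colon A\times A\to A$ satisfying idempotency $m(x,x)=x$, commutativity $m(x,y)=m(y,x)$ and transposition $m(m(x,y),m(z,w))=m(m(x,z),m(y,w))$. A homomorphism of midpoint objects is a map $h$ with $h(m(x,y))=m'(h(x),h(y))$. $(A,m)$ is iterative if for every map $c\colon X\to A\times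 X$ there is a unique map $u\colon X\to A$ with $m\circ(\mathrm{id}_A\times u)\circ c = u$. *)

theory Defs
  imports Main
begin

text \<open>A category (objects of type 'o, arrows of type 'a) equipped with chosen finite
products (terminal object + binary products), a chosen parametrised natural numbers
object Nat with Zero, Succ, and chosen exponentials Exp A = A^Nat with evaluation Ev A.\<close>

record ('o, 'a) ccat =
  Dom  :: "'a \<Rightarrow> 'o"
  Cod  :: "'a \<Rightarrow> 'o"
  Comp :: "'a \<Rightarrow> 'a \<Rightarrow> 'a"   (* Comp g f = g o f *)
  Id   :: "'o \<Rightarrow> 'a"
  Trm  :: "'o"
  Bang :: "'o \<Rightarrow> 'a"
  Prod :: "'o \<Rightarrow> 'o \<Rightarrow> 'o"
  Pi1  :: "'o \<Rightarrow> 'o \<Rightarrow> 'a"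
  Pi2  :: "'o \<Rightarrow> 'o \<Rightarrow> 'a"
  Pair :: "'a \<Rightarrow> 'a \<Rightarrow> 'a"
  Nat  :: "'o"
  Zero :: "'a"
  Succ :: "'a"
  Exp  :: "'o \<Rightarrow> 'o"
  Ev   :: "'o \<Rightarrow> 'a"

definition hom :: "('o, 'a, 'r) ccat_scheme \<Rightarrow> 'o \<Rightarrow> 'o \<Rightarrow> 'a set" where
  "hom C X Y = {f. Dom C f = X \<and> Cod C f = Y}"

definition is_category :: "('o, 'a, 'r) ccat_scheme \<Rightarrow> bool" where
  "is_category C \<longleftrightarrow>
     (\<forall>X. Id C X \<in> hom C X X) \<and>
     (\<forall>X Y Z f g. f \<in> hom C X Y \<longrightarrow> g \<in> hom C Y Z \<longrightarrow> Comp C g f \<in> hom C X Z) \<and>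
     (\<forall>X Y f. f \<in> hom C X Y \<longrightarrow> Comp C f (Id C X) = f \<and> Comp C (Id C Y) f = f) \<and>
     (\<forall>W X Y Z f g h. f \<in> hom C W X \<longrightarrow> g \<in> hom C X Y \<longrightarrow> h \<in> hom C Y Z \<longrightarrow>
        Comp C h (Comp C g f) = Comp C (Comp C h g) f)"

definition has_finite_products :: "('o, 'a, 'r) ccat_scheme \<Rightarrow> bool" where
  "has_finite_products C \<longleftrightarrow>
     (\<forall>X. Bang C X \<in> hom C X (Trm C) \<and> (\<forall>f \<in> hom C X (Trm C). f = Bang C X)) \<and>
     (\<forall>X Y. Pi1 C X Y \<in> hom C (Prod C X Y) X \<and> Pi2 C X Y \<in> hom C (Prod C X Y) Y \<and>
        (\<forall>Z f g. f \<in> hom C Z X \<longrightarrow> g \<in> hom C Z Y \<longrightarrow>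
           Pair C f g \<in> hom C Z (Prod C X Y) \<and>
           Comp C (Pi1 C X Y) (Pair C f g) = f \<and> Comp C (Pi2 C X Y) (Pair C f g) = g) \<and>
        (\<forall>Z h. h \<in> hom C Z (Prod C X Y) \<longrightarrow>
           Pair C (Comp C (Pi1 C X Y) h) (Comp C (Pi2 C X Y) h) = h))"

definition cross :: "('o, 'a, 'r) ccat_scheme \<Rightarrow> 'o \<Rightarrow> 'o \<Rightarrow> 'a \<Rightarrow> 'a \<Rightarrow> 'a" where
  "cross C X Y f g = Pair C (Comp C f (Pi1 C X Y)) (Comp C g (Pi2 C X Y))"

definition is_pnno :: "('o, 'a, 'r) ccat_scheme \<Rightarrow> bool" where
  "is_pnno C \<longleftrightarrow>
     Zero C \<in> hom C (Trm C) (Nat C) \<and> Succ C \<in> hom C (Nat C) (Nat C) \<and>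
     (\<forall>P X a f. a \<in> hom C P X \<longrightarrow> f \<in> hom C (Prod C P X) X \<longrightarrow>
        (\<exists>!g. g \<in> hom C (Prod C P (Nat C)) X \<and>
           (\<forall>W p. p \<in> hom C W P \<longrightarrow>
              Comp C g (Pair C p (Comp C (Zero C) (Bang C W))) = Comp C a p) \<and>
           (\<forall>W p n. p \<in> hom C W P \<longrightarrow> n \<in> hom C W (Nat C) \<longrightarrow>
              Comp C g (Pair C p (Comp C (Succ C) n)) = Comp C f (Pair C p (Comp C g (Pair C p n))))))"

definition nno_exponentiable :: "('o, 'a, 'r) ccat_scheme \<Rightarrow> bool" where
  "nno_exponentiable C \<longleftrightarrow>
     (\<forall>A. Ev C A \<in> hom C (Prod C (Exp C A) (Nat C)) A \<and>
        (\<forall>Z g. g \<in> hom C (Prod C Z (Nat C)) A \<longrightarrow>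
           (\<exists>!h. h \<in> hom C Z (Exp C A) \<and>
              Comp C (Ev C A) (cross C Z (Nat C) h (Id C (Nat C))) = g)))"

definition cat_with_exp_pnno :: "('o, 'a, 'r) ccat_scheme \<Rightarrow> bool" where
  "cat_with_exp_pnno C \<longleftrightarrow> is_category C \<and> has_finite_products C \<and> is_pnno C \<and> nno_exponentiable C"

definition curryN :: "('o, 'a, 'r) ccat_scheme \<Rightarrow> 'o \<Rightarrow> 'o \<Rightarrow> 'a \<Rightarrow> 'a" where
  "curryN C Z A g = (THE h. h \<in> hom C Z (Exp C A) \<and>
       Comp C (Ev C A) (cross C Z (Nat C) h (Id C (Nat C))) = g)"

text \<open>x_i for a sequence x : W \<rightarrow> A^N and an index i : W \<rightarrow> N.\<close>
definition seq_at :: "('o, 'a, 'r) ccat_scheme \<Rightarrow> 'o \<Rightarrow> 'a \<Rightarrow> 'a \<Rightarrow> 'a" where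
  "seq_at C A x i = Comp C (Ev C A) (Pair C x i)"

definition shift :: "('o, 'a, 'r) ccat_scheme \<Rightarrow> 'o \<Rightarrow> 'o \<Rightarrow> 'a \<Rightarrow> 'a" where
  "shift C Z A x = curryN C Z A (Comp C (Ev C A) (cross C Z (Nat C) x (Succ C)))"

definition map_seq :: "('o, 'a, 'r) ccat_scheme \<Rightarrow> 'o \<Rightarrow> 'o \<Rightarrow> 'o \<Rightarrow> 'a \<Rightarrow> 'a \<Rightarrow> 'a" where
  "map_seq C Z A A' f x =
     curryN C Z A' (Comp C f (Comp C (Ev C A) (cross C Z (Nat C) x (Id C (Nat C)))))"

definition midpoint_obj :: "('o, 'a, 'r) ccat_scheme \<Rightarrow> 'o \<Rightarrow> 'a \<Rightarrow> bool" where
  "midpoint_obj C A m \<longleftrightarrow> m \<in> hom C (Prod C A A) A \<and>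
     (\<forall>Z x. x \<in> hom C Z A \<longrightarrow> Comp C m (Pair C x x) = x) \<and>
     (\<forall>Z x y. x \<in> hom C Z A \<longrightarrow> y \<in> hom C Z A \<longrightarrow> Comp C m (Pair C x y) = Comp C m (Pair C y x)) \<and>
     (\<forall>Z x y z w. x \<in> hom C Z A \<longrightarrow> y \<in> hom C Z A \<longrightarrow> z \<in> hom C Z A \<longrightarrow> w \<in> hom C Z A \<longrightarrow>
        Comp C m (Pair C (Comp C m (Pair C x y)) (Comp C m (Pair C z w))) =
        Comp C m (Pair C (Comp C m (Pair C x z)) (Comp C m (Pair C y w))))"

definition midpoint_hom :: "('o, 'a, 'r) ccat_scheme \<Rightarrow> 'o \<Rightarrow> 'a \<Rightarrow> 'o \<Rightarrow> 'a \<Rightarrow> 'a \<Rightarrow> bool" where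
  "midpoint_hom C A m A' m' h \<longleftrightarrow> h \<in> hom C A A' \<and>
     (\<forall>Z x y. x \<in> hom C Z A \<longrightarrow> y \<in> hom C Z A \<longrightarrow>
        Comp C h (Comp C m (Pair C x y)) = Comp C m' (Pair C (Comp C h x) (Comp C h y)))"

definition iterative :: "('o, 'a, 'r) ccat_scheme \<Rightarrow> 'o \<Rightarrow> 'a \<Rightarrow> bool" where
  "iterative C A m \<longleftrightarrow>
     (\<forall>X c. c \<in> hom C X (Prod C A X) \<longrightarrow>
        (\<exists>!u. u \<in> hom C X A \<and> Comp C m (Comp C (cross C A X (Id C A) u) c) = u))"

definition unfolding_law :: "('o, 'a, 'r) ccat_scheme \<Rightarrow> 'o \<Rightarrow> 'a \<Rightarrow> 'a \<Rightarrow> bool" where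
  "unfolding_law C A m M \<longleftrightarrow>
     (\<forall>Z x. x \<in> hom C Z (Exp C A) \<longrightarrow>
        Comp C M x = Comp C m (Pair C (seq_at C A x (Comp C (Zero C) (Bang C Z))) (Comp C M (shift C Z A x))))"

definition canonicity :: "('o, 'a, 'r) ccat_scheme \<Rightarrow> 'o \<Rightarrow> 'a \<Rightarrow> 'a \<Rightarrow> bool" where
  "canonicity C A m M \<longleftrightarrow>
     (\<forall>Z x y. x \<in> hom C Z (Exp C A) \<longrightarrow> y \<in> hom C Z (Exp C A) \<longrightarrow>
        (\<forall>W w i. w \<in> hom C W Z \<longrightarrow> i \<in> hom C W (Nat C) \<longrightarrow>
           seq_at C A (Comp C y w) i =
           Comp C m (Pair C (seq_at C A (Comp C x w) i) (seq_at C A (Comp C y w) (Comp C (Succ C) i)))) \<longrightarrow>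
        seq_at C A y (Comp C (Zero C) (Bang C Z)) = Comp C M x)"

end

theory Submission
  imports Defs
begin


lemma hom_iff: "f \<in> hom C X Y \<longleftrightarrow> Dom C f = X \<and> Cod C f = Y"
  by (simp add: hom_def)

locale CC =
  fixes C :: "('o, 'a) ccat"
  assumes ax: "cat_with_exp_pnno C"
begin

abbreviation cmp (infixr "\<cdot>" 55) where "g \<cdot> f \<equiv> Comp C g f"
abbreviation dm where "dm \<equiv> Dom C"
abbreviation cd where "cd \<equiv> Cod C"
abbreviation NN where "NN \<equiv> Nat C"
abbreviation zz where "zz W \<equiv> Zero C \<cdot> Bang C W"

lemma cat: "is_category C" and fp: "has_finite_products C" and pn: "is_pnno C"
  and ex: "nno_exponentiable C"
  using ax by (auto simp: cat_with_exp_pnno_def)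

lemma comp_typ: "cd f = dm g \<Longrightarrow> dm (g \<cdot> f) = dm f \<and> cd (g \<cdot> f) = cd g"
  using cat unfolding is_category_def hom_def by blast

lemma dom_comp[simp]: "cd f = dm g \<Longrightarrow> dm (g \<cdot> f) = dm f" using comp_typ by blast
lemma cod_comp[simp]: "cd f = dm g \<Longrightarrow> cd (g \<cdot> f) = cd g" using comp_typ by blast

lemma id_typ[simp]: "dm (Id C X) = X" "cd (Id C X) = X"
  using cat unfolding is_category_def hom_def by auto

lemma id_r[simp]: "dm f = X \<Longrightarrow> f \<cdot> Id C X = f"
  using cat unfolding is_category_def hom_def by blast
lemma id_l[simp]: "cd f = X \<Longrightarrow> Id C X \<cdot> f = f"
  using cat unfolding is_category_def hom_def by blast

lemma assoc[simp]: "cd f = dm g \<Longrightarrow> cd g = dm h \<Longrightarrow> (h \<cdot> g) \<cdot> f = h \<cdot> (g \<cdot> f)"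
proof -
  assume a: "cd f = dm g" "cd g = dm h"
  have "\<forall>W X Y Z f g h. f \<in> hom C W X \<longrightarrow> g \<in> hom C X Y \<longrightarrow> h \<in> hom C Y Z \<longrightarrow>
        h \<cdot> (g \<cdot> f) = (h \<cdot> g) \<cdot> f" using cat unfolding is_category_def by blast
  then show ?thesis using a unfolding hom_def by force
qed

lemma bang_typ[simp]: "dm (Bang C X) = X" "cd (Bang C X) = Trm C"
  using fp unfolding has_finite_products_def hom_def by auto

lemma bang_uniq: "dm f = X \<Longrightarrow> cd f = Trm C \<Longrightarrow> f = Bang C X"
  using fp unfolding has_finite_products_def hom_def by auto

lemma bang_comp[simp]: "cd h = Y \<Longrightarrow> Bang C Y \<cdot> h = Bang C (dm h)"
  by (rule bang_uniq) auto

lemma pi_typ[simp]: "dm (Pi1 C X Y) = Prod C X Y" "cd (Pi1 C X Y) = X"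
  "dm (Pi2 C X Y) = Prod C X Y" "cd (Pi2 C X Y) = Y"
  using fp unfolding has_finite_products_def hom_def by auto

lemma pair_typ0: "dm f = dm g \<Longrightarrow> dm (Pair C f g) = dm f \<and> cd (Pair C f g) = Prod C (cd f) (cd g)
  \<and> Pi1 C (cd f) (cd g) \<cdot> Pair C f g = f \<and> Pi2 C (cd f) (cd g) \<cdot> Pair C f g = g"
proof -
  assume "dm f = dm g"
  moreover have "\<forall>X Y Z f g. f \<in> hom C Z X \<longrightarrow> g \<in> hom C Z Y \<longrightarrow>
           Pair C f g \<in> hom C Z (Prod C X Y) \<and>
           Pi1 C X Y \<cdot> Pair C f g = f \<and> Pi2 C X Y \<cdot> Pair C f g = g"
    using fp unfolding has_finite_products_def by blast
  ultimately show ?thesis unfolding hom_def by force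
qed

lemma pair_dom[simp]: "dm f = dm g \<Longrightarrow> dm (Pair C f g) = dm f" using pair_typ0 by blast
lemma pair_cod[simp]: "dm f = dm g \<Longrightarrow> cd (Pair C f g) = Prod C (cd f) (cd g)" using pair_typ0 by blast
lemma pi1_pair[simp]: "dm f = dm g \<Longrightarrow> cd f = X \<Longrightarrow> cd g = Y \<Longrightarrow> Pi1 C X Y \<cdot> Pair C f g = f"
  using pair_typ0 by blast
lemma pi2_pair[simp]: "dm f = dm g \<Longrightarrow> cd f = X \<Longrightarrow> cd g = Y \<Longrightarrow> Pi2 C X Y \<cdot> Pair C f g = g"
  using pair_typ0 by blast

lemma pair_eta: "cd h = Prod C X Y \<Longrightarrow> Pair C (Pi1 C X Y \<cdot> h) (Pi2 C X Y \<cdot> h) = h"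
  using fp unfolding has_finite_products_def hom_def by blast

lemma pair_pi[simp]: "Pair C (Pi1 C X Y) (Pi2 C X Y) = Id C (Prod C X Y)"
  using pair_eta[of "Id C (Prod C X Y)" X Y] by simp

lemma pair_comp[simp]: "dm f = dm g \<Longrightarrow> cd h = dm f \<Longrightarrow> Pair C f g \<cdot> h = Pair C (f \<cdot> h) (g \<cdot> h)"
proof -
  assume a: "dm f = dm g" "cd h = dm f"
  have "Pair C (Pi1 C (cd f) (cd g) \<cdot> (Pair C f g \<cdot> h)) (Pi2 C (cd f) (cd g) \<cdot> (Pair C f g \<cdot> h)) = Pair C f g \<cdot> h"
    by (rule pair_eta) (use a in simp)
  moreover have "Pi1 C (cd f) (cd g) \<cdot> (Pair C f g \<cdot> h) = f \<cdot> h"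
    using a assoc[of h "Pair C f g" "Pi1 C (cd f) (cd g)"] by simp
  moreover have "Pi2 C (cd f) (cd g) \<cdot> (Pair C f g \<cdot> h) = g \<cdot> h"
    using a assoc[of h "Pair C f g" "Pi2 C (cd f) (cd g)"] by simp
  ultimately show ?thesis by simp
qed

lemma pi1_pair_comp[simp]: "dm f = dm g \<Longrightarrow> cd f = X \<Longrightarrow> cd g = Y \<Longrightarrow> cd h = dm f \<Longrightarrow>
   Pi1 C X Y \<cdot> (Pair C f g \<cdot> h) = f \<cdot> h"
  by simp
lemma pi2_pair_comp[simp]: "dm f = dm g \<Longrightarrow> cd f = X \<Longrightarrow> cd g = Y \<Longrightarrow> cd h = dm f \<Longrightarrow>
   Pi2 C X Y \<cdot> (Pair C f g \<cdot> h) = g \<cdot> h"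
  by simp

lemma zero_typ[simp]: "dm (Zero C) = Trm C" "cd (Zero C) = NN"
  and succ_typ[simp]: "dm (Succ C) = NN" "cd (Succ C) = NN"
  using pn unfolding is_pnno_def hom_def by auto

lemma ev_typ[simp]: "dm (Ev C A) = Prod C (Exp C A) NN" "cd (Ev C A) = A"
  using ex unfolding nno_exponentiable_def hom_def by auto


lemma cross_typ[simp]: "dm f = X \<Longrightarrow> dm g = Y \<Longrightarrow> dm (cross C X Y f g) = Prod C X Y"
   "dm f = X \<Longrightarrow> dm g = Y \<Longrightarrow> cd (cross C X Y f g) = Prod C (cd f) (cd g)"
  by (simp_all add: cross_def)

lemma cross_pair[simp]: "dm f = X \<Longrightarrow> dm g = Y \<Longrightarrow> dm a = dm b \<Longrightarrow> cd a = X \<Longrightarrow> cd b = Y \<Longrightarrow>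
  cross C X Y f g \<cdot> Pair C a b = Pair C (f \<cdot> a) (g \<cdot> b)"
  by (simp add: cross_def)

lemma curry: "dm g = Prod C Z NN \<Longrightarrow> cd g = A \<Longrightarrow> dm (curryN C Z A g) = Z \<and> cd (curryN C Z A g) = Exp C A
   \<and> Ev C A \<cdot> cross C Z NN (curryN C Z A g) (Id C NN) = g"
proof -
  assume a: "dm g = Prod C Z NN" "cd g = A"
  have "\<exists>!h. h \<in> hom C Z (Exp C A) \<and> Ev C A \<cdot> cross C Z NN h (Id C NN) = g"
    using ex a unfolding nno_exponentiable_def hom_def by blast
  from theI'[OF this] show ?thesis unfolding curryN_def hom_def by blast
qed

lemma curry_dom[simp]: "dm g = Prod C Z NN \<Longrightarrow> cd g = A \<Longrightarrow> dm (curryN C Z A g) = Z" using curry by blast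
lemma curry_cod[simp]: "dm g = Prod C Z NN \<Longrightarrow> cd g = A \<Longrightarrow> cd (curryN C Z A g) = Exp C A" using curry by blast

lemma curry_uniq: "dm h = Z \<Longrightarrow> cd h = Exp C A \<Longrightarrow> Ev C A \<cdot> cross C Z NN h (Id C NN) = g \<Longrightarrow> h = curryN C Z A g"
proof -
  assume a: "dm h = Z" "cd h = Exp C A" "Ev C A \<cdot> cross C Z NN h (Id C NN) = g"
  have g: "dm g = Prod C Z NN" "cd g = A" using a(3)[symmetric] a(1,2) by auto
  have "\<exists>!h. h \<in> hom C Z (Exp C A) \<and> Ev C A \<cdot> cross C Z NN h (Id C NN) = g"
    using ex g unfolding nno_exponentiable_def hom_def by blast
  then show ?thesis unfolding curryN_def using a
    by (intro the1_equality[symmetric]) (auto simp: hom_def)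
qed

lemma ev_curry[simp]: "dm g = Prod C Z NN \<Longrightarrow> cd g = A \<Longrightarrow> cd w = Z \<Longrightarrow> dm i = dm w \<Longrightarrow> cd i = NN \<Longrightarrow>
  Ev C A \<cdot> Pair C (curryN C Z A g \<cdot> w) i = g \<cdot> Pair C w i"
proof -
  assume a: "dm g = Prod C Z NN" "cd g = A" "cd w = Z" "dm i = dm w" "cd i = NN"
  have "g \<cdot> Pair C w i = (Ev C A \<cdot> cross C Z NN (curryN C Z A g) (Id C NN)) \<cdot> Pair C w i"
    using curry[OF a(1,2)] by simp
  also have "\<dots> = Ev C A \<cdot> (cross C Z NN (curryN C Z A g) (Id C NN) \<cdot> Pair C w i)"
    using a by simp
  also have "\<dots> = Ev C A \<cdot> Pair C (curryN C Z A g \<cdot> w) i" using a by simp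
  finally show ?thesis by simp
qed

lemma ev_curry0[simp]: "dm g = Prod C Z NN \<Longrightarrow> cd g = A \<Longrightarrow> dm i = Z \<Longrightarrow> cd i = NN \<Longrightarrow>
  Ev C A \<cdot> Pair C (curryN C Z A g) i = g \<cdot> Pair C (Id C Z) i"
proof -
  assume a: "dm g = Prod C Z NN" "cd g = A" "dm i = Z" "cd i = NN"
  have "Ev C A \<cdot> Pair C (curryN C Z A g \<cdot> Id C Z) i = g \<cdot> Pair C (Id C Z) i"
    by (rule ev_curry) (use a in auto)
  then show ?thesis using a by simp
qed

lemma ext: "dm h1 = Z \<Longrightarrow> dm h2 = Z \<Longrightarrow> cd h1 = Exp C A \<Longrightarrow> cd h2 = Exp C A \<Longrightarrow>
  Ev C A \<cdot> Pair C (h1 \<cdot> Pi1 C Z NN) (Pi2 C Z NN) = Ev C A \<cdot> Pair C (h2 \<cdot> Pi1 C Z NN) (Pi2 C Z NN) \<Longrightarrow> h1 = h2"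
proof -
  assume a: "dm h1 = Z" "dm h2 = Z" "cd h1 = Exp C A" "cd h2 = Exp C A"
    "Ev C A \<cdot> Pair C (h1 \<cdot> Pi1 C Z NN) (Pi2 C Z NN) = Ev C A \<cdot> Pair C (h2 \<cdot> Pi1 C Z NN) (Pi2 C Z NN)"
  have c: "cross C Z NN h (Id C NN) = Pair C (h \<cdot> Pi1 C Z NN) (Pi2 C Z NN)" if "dm h = Z" for h
    using that by (simp add: cross_def)
  have "h1 = curryN C Z A (Ev C A \<cdot> Pair C (h1 \<cdot> Pi1 C Z NN) (Pi2 C Z NN))"
    by (rule curry_uniq) (use a c in auto)
  moreover have "h2 = curryN C Z A (Ev C A \<cdot> Pair C (h1 \<cdot> Pi1 C Z NN) (Pi2 C Z NN))"
    by (rule curry_uniq) (use a c in auto)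
  ultimately show ?thesis by simp
qed

lemma extg: "dm h1 = Z \<Longrightarrow> dm h2 = Z \<Longrightarrow> cd h1 = Exp C A \<Longrightarrow> cd h2 = Exp C A \<Longrightarrow>
  (\<And>w i. cd w = Z \<Longrightarrow> dm i = dm w \<Longrightarrow> cd i = NN \<Longrightarrow> Ev C A \<cdot> Pair C (h1 \<cdot> w) i = Ev C A \<cdot> Pair C (h2 \<cdot> w) i)
  \<Longrightarrow> h1 = h2"
  by (rule ext) auto

definition isrec where "isrec P X a f g \<longleftrightarrow> dm g = Prod C P NN \<and> cd g = X \<and>
   (\<forall>p. cd p = P \<longrightarrow> g \<cdot> Pair C p (zz (dm p)) = a \<cdot> p) \<and>
   (\<forall>p n. cd p = P \<longrightarrow> cd n = NN \<longrightarrow> dm n = dm p \<longrightarrow> g \<cdot> Pair C p (Succ C \<cdot> n) = f \<cdot> Pair C p (g \<cdot> Pair C p n))"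

lemma pn_unique: "dm a = P \<Longrightarrow> cd a = X \<Longrightarrow> dm f = Prod C P X \<Longrightarrow> cd f = X \<Longrightarrow> \<exists>!g. isrec P X a f g"
proof -
  assume a: "dm a = P" "cd a = X" "dm f = Prod C P X" "cd f = X"
  have "\<exists>!g. g \<in> hom C (Prod C P NN) X \<and>
           (\<forall>W p. p \<in> hom C W P \<longrightarrow>
              g \<cdot> (Pair C p (zz W)) = a \<cdot> p) \<and>
           (\<forall>W p n. p \<in> hom C W P \<longrightarrow> n \<in> hom C W NN \<longrightarrow>
              g \<cdot> (Pair C p (Succ C \<cdot> n)) = f \<cdot> (Pair C p (g \<cdot> (Pair C p n))))"
  proof -
    have "\<forall>P X a f. a \<in> hom C P X \<longrightarrow> f \<in> hom C (Prod C P X) X \<longrightarrow>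
        (\<exists>!g. g \<in> hom C (Prod C P (Nat C)) X \<and>
           (\<forall>W p. p \<in> hom C W P \<longrightarrow>
              Comp C g (Pair C p (Comp C (Zero C) (Bang C W))) = Comp C a p) \<and>
           (\<forall>W p n. p \<in> hom C W P \<longrightarrow> n \<in> hom C W (Nat C) \<longrightarrow>
              Comp C g (Pair C p (Comp C (Succ C) n)) = Comp C f (Pair C p (Comp C g (Pair C p n)))))"
      using pn unfolding is_pnno_def by (elim conjE)
    moreover have "a \<in> hom C P X" "f \<in> hom C (Prod C P X) X" using a by (auto simp: hom_def)
    ultimately show ?thesis by (elim allE impE) 
  qed
  moreover have "(g \<in> hom C (Prod C P NN) X \<and>
           (\<forall>W p. p \<in> hom C W P \<longrightarrow>
              g \<cdot> (Pair C p (zz W)) = a \<cdot> p) \<and>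
           (\<forall>W p n. p \<in> hom C W P \<longrightarrow> n \<in> hom C W NN \<longrightarrow>
              g \<cdot> (Pair C p (Succ C \<cdot> n)) = f \<cdot> (Pair C p (g \<cdot> (Pair C p n))))) = isrec P X a f g" for g
    unfolding isrec_def hom_def mem_Collect_eq
    by (intro iffI; elim conjE; intro conjI allI impI; (elim conjE)?; blast)
  ultimately show ?thesis by simp
qed

lemma rec_ex: "dm a = P \<Longrightarrow> cd a = X \<Longrightarrow> dm f = Prod C P X \<Longrightarrow> cd f = X \<Longrightarrow> \<exists>g. isrec P X a f g"
  using pn_unique by blast
lemma rec_uniq: "dm a = P \<Longrightarrow> cd a = X \<Longrightarrow> dm f = Prod C P X \<Longrightarrow> cd f = X \<Longrightarrow> isrec P X a f g1 \<Longrightarrow> isrec P X a f g2 \<Longrightarrow> g1 = g2"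
  using pn_unique by blast

end


context CC
begin

lemma shift_typ[simp]: "dm x = Z \<Longrightarrow> cd x = Exp C A \<Longrightarrow> dm (shift C Z A x) = Z"
   "dm x = Z \<Longrightarrow> cd x = Exp C A \<Longrightarrow> cd (shift C Z A x) = Exp C A"
  by (simp_all add: shift_def cross_def)

lemma ev_shift[simp]: "dm x = Z \<Longrightarrow> cd x = Exp C A \<Longrightarrow> cd w = Z \<Longrightarrow> dm i = dm w \<Longrightarrow> cd i = NN \<Longrightarrow>
  Ev C A \<cdot> Pair C (shift C Z A x \<cdot> w) i = Ev C A \<cdot> Pair C (x \<cdot> w) (Succ C \<cdot> i)"
  unfolding shift_def by (subst ev_curry) (simp_all add: cross_def)

lemma ev_shift0[simp]: "dm x = Z \<Longrightarrow> cd x = Exp C A \<Longrightarrow> dm i = Z \<Longrightarrow> cd i = NN \<Longrightarrow>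
  Ev C A \<cdot> Pair C (shift C Z A x) i = Ev C A \<cdot> Pair C x (Succ C \<cdot> i)"
  using ev_shift[of x Z A "Id C Z" i] by simp

lemma map_typ[simp]: "dm x = Z \<Longrightarrow> cd x = Exp C A \<Longrightarrow> dm f = A \<Longrightarrow> cd f = A' \<Longrightarrow> dm (map_seq C Z A A' f x) = Z"
   "dm x = Z \<Longrightarrow> cd x = Exp C A \<Longrightarrow> dm f = A \<Longrightarrow> cd f = A' \<Longrightarrow> cd (map_seq C Z A A' f x) = Exp C A'"
  by (simp_all add: map_seq_def cross_def)

lemma ev_map[simp]: "dm x = Z \<Longrightarrow> cd x = Exp C A \<Longrightarrow> dm f = A \<Longrightarrow> cd f = A' \<Longrightarrow> cd w = Z \<Longrightarrow> dm i = dm w \<Longrightarrow> cd i = NN \<Longrightarrow>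
  Ev C A' \<cdot> Pair C (map_seq C Z A A' f x \<cdot> w) i = f \<cdot> Ev C A \<cdot> Pair C (x \<cdot> w) i"
  unfolding map_seq_def by (subst ev_curry) (simp_all add: cross_def)

lemma iterE: "iterative C A m \<Longrightarrow> dm c = X \<Longrightarrow> cd c = Prod C A X \<Longrightarrow>
   \<exists>!u. dm u = X \<and> cd u = A \<and> m \<cdot> (cross C A X (Id C A) u \<cdot> c) = u"
  unfolding iterative_def hom_def by blast


definition ad where "ad = (SOME g. isrec NN NN (Id C NN) (Succ C \<cdot> Pi2 C NN NN) g)"

lemma ad_rec: "isrec NN NN (Id C NN) (Succ C \<cdot> Pi2 C NN NN) ad"
  unfolding ad_def by (rule someI_ex, rule rec_ex) auto

lemma ad_typ[simp]: "dm ad = Prod C NN NN" "cd ad = NN"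
  using ad_rec unfolding isrec_def by auto

lemma ad_z[simp]: "cd p = NN \<Longrightarrow> dm p = W \<Longrightarrow> ad \<cdot> Pair C p (zz W) = p"
  using ad_rec unfolding isrec_def by auto

lemma ad_s[simp]: "cd p = NN \<Longrightarrow> cd n = NN \<Longrightarrow> dm n = dm p \<Longrightarrow> ad \<cdot> Pair C p (Succ C \<cdot> n) = Succ C \<cdot> ad \<cdot> Pair C p n"
proof -
  assume a: "cd p = NN" "cd n = NN" "dm n = dm p"
  then have "ad \<cdot> Pair C p (Succ C \<cdot> n) = (Succ C \<cdot> Pi2 C NN NN) \<cdot> Pair C p (ad \<cdot> Pair C p n)"
    using ad_rec unfolding isrec_def by auto
  then show ?thesis using a by simp
qed

lemma ad_S1[simp]: "cd p = NN \<Longrightarrow> cd n = NN \<Longrightarrow> dm n = dm p \<Longrightarrow> ad \<cdot> Pair C (Succ C \<cdot> p) n = Succ C \<cdot> ad \<cdot> Pair C p n"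
proof -
  assume a: "cd p = NN" "cd n = NN" "dm n = dm p"
  have "isrec NN NN (Succ C) (Succ C \<cdot> Pi2 C NN NN) (ad \<cdot> cross C NN NN (Succ C) (Id C NN))"
    unfolding isrec_def by (simp add: cross_def)
  moreover have "isrec NN NN (Succ C) (Succ C \<cdot> Pi2 C NN NN) (Succ C \<cdot> ad)"
    unfolding isrec_def by simp
  ultimately have "ad \<cdot> cross C NN NN (Succ C) (Id C NN) = Succ C \<cdot> ad"
    by (rule rec_uniq[rotated 4]) auto
  then have "(ad \<cdot> cross C NN NN (Succ C) (Id C NN)) \<cdot> Pair C p n = (Succ C \<cdot> ad) \<cdot> Pair C p n" by simp
  then show ?thesis using a by (simp add: cross_def)
qed

lemma ad_01[simp]: "cd n = NN \<Longrightarrow> dm n = W \<Longrightarrow> ad \<cdot> Pair C (zz W) n = n"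
proof -
  assume a: "cd n = NN" "dm n = W"
  have b: "p = Bang C (dm p)" if "cd p = Trm C" for p using bang_uniq that by simp
  have "isrec (Trm C) NN (Zero C) (Succ C \<cdot> Pi2 C (Trm C) NN) (ad \<cdot> Pair C (Zero C \<cdot> Pi1 C (Trm C) NN) (Pi2 C (Trm C) NN))"
    unfolding isrec_def
  proof (intro conjI allI impI)
    fix p assume "cd p = Trm C"
    then have e: "Zero C \<cdot> p = zz (dm p)" using b[of p] by metis
    then show "(ad \<cdot> Pair C (Zero C \<cdot> Pi1 C (Trm C) NN) (Pi2 C (Trm C) NN)) \<cdot> Pair C p (zz (dm p)) = Zero C \<cdot> p"
      using \<open>cd p = Trm C\<close> by (simp add: e)
  qed simp_all
  moreover have "isrec (Trm C) NN (Zero C) (Succ C \<cdot> Pi2 C (Trm C) NN) (Pi2 C (Trm C) NN)"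
    unfolding isrec_def
  proof (intro conjI allI impI)
    fix p assume "cd p = Trm C"
    then have e: "Zero C \<cdot> p = zz (dm p)" using b[of p] by metis
    then show "Pi2 C (Trm C) NN \<cdot> Pair C p (zz (dm p)) = Zero C \<cdot> p"
      using \<open>cd p = Trm C\<close> by (simp add: e)
  qed simp_all
  ultimately have "ad \<cdot> Pair C (Zero C \<cdot> Pi1 C (Trm C) NN) (Pi2 C (Trm C) NN) = Pi2 C (Trm C) NN"
    by (rule rec_uniq[rotated 4]) auto
  then have "(ad \<cdot> Pair C (Zero C \<cdot> Pi1 C (Trm C) NN) (Pi2 C (Trm C) NN)) \<cdot> Pair C (Bang C W) n
     = Pi2 C (Trm C) NN \<cdot> Pair C (Bang C W) n" by simp
  then show ?thesis using a by simp
qed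

end


context CC
begin

abbreviation hd where "hd A \<equiv> Ev C A \<cdot> Pair C (Id C (Exp C A)) (zz (Exp C A))"
abbreviation sg where "sg A \<equiv> shift C (Exp C A) A (Id C (Exp C A))"

lemma sg_nat: "dm x = Z \<Longrightarrow> cd x = Exp C A \<Longrightarrow> sg A \<cdot> x = shift C Z A x"
  by (rule extg[where Z=Z and A=A]) auto

lemma unfold_from_eq: "dm M = Exp C A \<Longrightarrow> cd M = A \<Longrightarrow> dm m = Prod C A A \<Longrightarrow> cd m = A \<Longrightarrow>
   m \<cdot> Pair C (hd A) (M \<cdot> sg A) = M \<Longrightarrow> unfolding_law C A m M"
  unfolding unfolding_law_def hom_iff seq_at_def
proof (intro allI impI)
  fix Z x assume a: "dm M = Exp C A" "cd M = A" "dm m = Prod C A A" "cd m = A"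
    "m \<cdot> Pair C (hd A) (M \<cdot> sg A) = M" and x: "dm x = Z \<and> cd x = Exp C A"
  have "M \<cdot> x = (m \<cdot> Pair C (hd A) (M \<cdot> sg A)) \<cdot> x" using a(5) by simp
  also have "\<dots> = m \<cdot> Pair C (Ev C A \<cdot> Pair C x (zz Z)) (M \<cdot> (sg A \<cdot> x))" using a(1-4) x by simp
  also have "\<dots> = m \<cdot> Pair C (Ev C A \<cdot> Pair C x (zz Z)) (M \<cdot> shift C Z A x)" using x sg_nat by simp
  finally show "M \<cdot> x = m \<cdot> Pair C (Ev C A \<cdot> Pair C x (zz Z)) (M \<cdot> shift C Z A x)" .
qed

lemma eq_from_unfold: "dm M = Exp C A \<Longrightarrow> cd M = A \<Longrightarrow> dm m = Prod C A A \<Longrightarrow> cd m = A \<Longrightarrow>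
   unfolding_law C A m M \<Longrightarrow> m \<cdot> (cross C A (Exp C A) (Id C A) M \<cdot> Pair C (hd A) (sg A)) = M"
proof -
  assume a: "dm M = Exp C A" "cd M = A" "dm m = Prod C A A" "cd m = A" "unfolding_law C A m M"
  have u: "\<And>Z x. dm x = Z \<Longrightarrow> cd x = Exp C A \<Longrightarrow> M \<cdot> x = m \<cdot> Pair C (Ev C A \<cdot> Pair C x (zz Z)) (M \<cdot> shift C Z A x)"
    using a(5) unfolding unfolding_law_def hom_iff seq_at_def by blast
  have "M \<cdot> Id C (Exp C A) = m \<cdot> Pair C (Ev C A \<cdot> Pair C (Id C (Exp C A)) (zz (Exp C A))) (M \<cdot> sg A)"
    by (rule u) simp_all
  then show ?thesis using a(1-4) by simp
qed

lemma iter_M: "dm m = Prod C A A \<Longrightarrow> cd m = A \<Longrightarrow> iterative C A m \<Longrightarrow>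
   \<exists>!M. dm M = Exp C A \<and> cd M = A \<and> m \<cdot> (cross C A (Exp C A) (Id C A) M \<cdot> Pair C (hd A) (sg A)) = M"
  by (rule iterE) auto


lemma canon: "dm M = Exp C A \<Longrightarrow> cd M = A \<Longrightarrow> dm m = Prod C A A \<Longrightarrow> cd m = A \<Longrightarrow>
   iterative C A m \<Longrightarrow> unfolding_law C A m M \<Longrightarrow> canonicity C A m M"
  unfolding canonicity_def hom_iff seq_at_def
proof (intro allI impI)
  fix Z x y
  assume a: "dm M = Exp C A" "cd M = A" "dm m = Prod C A A" "cd m = A" "iterative C A m" "unfolding_law C A m M"
    and x: "dm x = Z \<and> cd x = Exp C A" and y: "dm y = Z \<and> cd y = Exp C A"
    and hyp: "\<forall>W w i. dm w = W \<and> cd w = Z \<longrightarrow> dm i = W \<and> cd i = NN \<longrightarrow>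
       Ev C A \<cdot> Pair C (y \<cdot> w) i = m \<cdot> Pair C (Ev C A \<cdot> Pair C (x \<cdot> w) i) (Ev C A \<cdot> Pair C (y \<cdot> w) (Succ C \<cdot> i))"
  have u: "\<And>Z x. dm x = Z \<Longrightarrow> cd x = Exp C A \<Longrightarrow> M \<cdot> x = m \<cdot> Pair C (Ev C A \<cdot> Pair C x (zz Z)) (M \<cdot> shift C Z A x)"
    using a(6) unfolding unfolding_law_def hom_iff seq_at_def by blast
  let ?ZN = "Prod C Z NN"
  let ?p1 = "Pi1 C Z NN"
  let ?p2 = "Pi2 C Z NN"
  define k where "k = curryN C ?ZN A (Ev C A \<cdot> Pair C (x \<cdot> ?p1 \<cdot> Pi1 C ?ZN NN) (ad \<cdot> Pair C (?p2 \<cdot> Pi1 C ?ZN NN) (Pi2 C ?ZN NN)))"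
  have kt[simp]: "dm k = ?ZN" "cd k = Exp C A" using x by (simp_all add: k_def)
  have kev[simp]: "Ev C A \<cdot> Pair C (k \<cdot> w) j = Ev C A \<cdot> Pair C (x \<cdot> ?p1 \<cdot> w) (ad \<cdot> Pair C (?p2 \<cdot> w) j)"
    if "cd w = ?ZN" "dm j = dm w" "cd j = NN" for w j
    using x that by (simp add: k_def)
  have K0: "Ev C A \<cdot> Pair C k (zz ?ZN) = Ev C A \<cdot> Pair C (x \<cdot> ?p1) ?p2"
    using x by (simp add: k_def)
  have K1: "shift C ?ZN A k = k \<cdot> cross C Z NN (Id C Z) (Succ C)"
    by (rule extg[where Z="?ZN" and A=A]) (use x in \<open>auto simp: cross_def\<close>)
  have K2: "k \<cdot> Pair C (Id C Z) (zz Z) = x"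
    by (rule extg[where Z="Z" and A=A]) (use x in \<open>auto\<close>)
  define c where "c = Pair C (Ev C A \<cdot> Pair C (x \<cdot> ?p1) ?p2) (cross C Z NN (Id C Z) (Succ C))"
  have ct: "dm c = ?ZN" "cd c = Prod C A ?ZN" using x by (simp_all add: c_def cross_def)
  let ?u1 = "Ev C A \<cdot> Pair C (y \<cdot> ?p1) ?p2"
  have H1: "m \<cdot> (cross C A ?ZN (Id C A) ?u1 \<cdot> c) = ?u1"
  proof -
    have e: "?u1 = m \<cdot> Pair C (Ev C A \<cdot> Pair C (x \<cdot> ?p1) ?p2) (Ev C A \<cdot> Pair C (y \<cdot> ?p1) (Succ C \<cdot> ?p2))"
      by (rule hyp[THEN spec, THEN spec, THEN spec, THEN mp, THEN mp]) (use y in simp_all)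
    have "m \<cdot> (cross C A ?ZN (Id C A) ?u1 \<cdot> c) =
      m \<cdot> Pair C (Ev C A \<cdot> Pair C (x \<cdot> ?p1) ?p2) (Ev C A \<cdot> Pair C (y \<cdot> ?p1) (Succ C \<cdot> ?p2))"
      using x y a(1-4) by (simp add: c_def cross_def)
    also have "\<dots> = ?u1" by (rule e[symmetric])
    finally show ?thesis .
  qed
  have H2: "m \<cdot> (cross C A ?ZN (Id C A) (M \<cdot> k) \<cdot> c) = M \<cdot> k"
  proof -
    have "m \<cdot> (cross C A ?ZN (Id C A) (M \<cdot> k) \<cdot> c) =
       m \<cdot> Pair C (Ev C A \<cdot> Pair C (x \<cdot> ?p1) ?p2) (M \<cdot> (k \<cdot> cross C Z NN (Id C Z) (Succ C)))"
      using x a(1-4) by (simp add: c_def)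
    also have "\<dots> = m \<cdot> Pair C (Ev C A \<cdot> Pair C k (zz ?ZN)) (M \<cdot> shift C ?ZN A k)"
      by (simp only: K0 K1)
    also have "\<dots> = M \<cdot> k" by (rule u[symmetric]) simp_all
    finally show ?thesis .
  qed
  have ex: "\<exists>!u. dm u = ?ZN \<and> cd u = A \<and> m \<cdot> (cross C A ?ZN (Id C A) u \<cdot> c) = u"
    by (rule iterE[OF a(5) ct])
  have P1: "dm ?u1 = ?ZN \<and> cd ?u1 = A \<and> m \<cdot> (cross C A ?ZN (Id C A) ?u1 \<cdot> c) = ?u1"
    by (intro conjI H1) (use y in simp_all)
  have P2: "dm (M \<cdot> k) = ?ZN \<and> cd (M \<cdot> k) = A \<and> m \<cdot> (cross C A ?ZN (Id C A) (M \<cdot> k) \<cdot> c) = M \<cdot> k"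
    by (intro conjI H2) (use a in simp_all)
  have "?u1 = M \<cdot> k"
    using ex P1 P2 by blast
  then have "?u1 \<cdot> Pair C (Id C Z) (zz Z) = (M \<cdot> k) \<cdot> Pair C (Id C Z) (zz Z)" by simp
  also have "\<dots> = M \<cdot> x" using a(1-4) K2 by simp
  finally show "Ev C A \<cdot> Pair C y (zz Z) = M \<cdot> x" using y by simp
qed

end


context CC
begin

lemma conv: "dm M = Exp C A \<Longrightarrow> cd M = A \<Longrightarrow> dm m = Prod C A A \<Longrightarrow> cd m = A \<Longrightarrow>
   unfolding_law C A m M \<Longrightarrow> canonicity C A m M \<Longrightarrow> iterative C A m"
  unfolding iterative_def hom_iff
proof (intro allI impI)
  fix X c
  assume a: "dm M = Exp C A" "cd M = A" "dm m = Prod C A A" "cd m = A" "unfolding_law C A m M" "canonicity C A m M"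
    and cc: "dm c = X \<and> cd c = Prod C A X"
  have u: "\<And>Z x. dm x = Z \<Longrightarrow> cd x = Exp C A \<Longrightarrow> M \<cdot> x = m \<cdot> Pair C (Ev C A \<cdot> Pair C x (zz Z)) (M \<cdot> shift C Z A x)"
    using a(5) unfolding unfolding_law_def hom_iff seq_at_def by blast
  have can: "Ev C A \<cdot> Pair C y (zz Z) = M \<cdot> x"
    if "dm x = Z" "cd x = Exp C A" "dm y = Z" "cd y = Exp C A"
     "\<And>w i. cd w = Z \<Longrightarrow> dm i = dm w \<Longrightarrow> cd i = NN \<Longrightarrow>
        Ev C A \<cdot> Pair C (y \<cdot> w) i = m \<cdot> Pair C (Ev C A \<cdot> Pair C (x \<cdot> w) i) (Ev C A \<cdot> Pair C (y \<cdot> w) (Succ C \<cdot> i))"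
    for Z x y
  proof -
    have H: "\<forall>W w i. dm w = W \<and> cd w = Z \<longrightarrow> dm i = W \<and> cd i = NN \<longrightarrow>
        Ev C A \<cdot> Pair C (y \<cdot> w) i = m \<cdot> Pair C (Ev C A \<cdot> Pair C (x \<cdot> w) i) (Ev C A \<cdot> Pair C (y \<cdot> w) (Succ C \<cdot> i))"
    proof (intro allI impI)
      fix W w i assume "dm w = W \<and> cd w = Z" "dm i = W \<and> cd i = NN"
      then show "Ev C A \<cdot> Pair C (y \<cdot> w) i = m \<cdot> Pair C (Ev C A \<cdot> Pair C (x \<cdot> w) i) (Ev C A \<cdot> Pair C (y \<cdot> w) (Succ C \<cdot> i))"
        by (intro that(5)) auto
    qed
    show ?thesis using a(6) that(1-4) H unfolding canonicity_def hom_iff seq_at_def by blast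
  qed
  define c1 where "c1 = Pi1 C A X \<cdot> c"
  define c2 where "c2 = Pi2 C A X \<cdot> c"
  have ceq: "c = Pair C c1 c2" unfolding c1_def c2_def using pair_eta cc by simp
  have ct[simp]: "dm c1 = X" "cd c1 = A" "dm c2 = X" "cd c2 = X" using cc by (simp_all add: c1_def c2_def)
  define st where "st = (SOME g. isrec X X (Id C X) (c2 \<cdot> Pi2 C X X) g)"
  have st_rec: "isrec X X (Id C X) (c2 \<cdot> Pi2 C X X) st"
    unfolding st_def by (rule someI_ex, rule rec_ex) auto
  have st_t[simp]: "dm st = Prod C X NN" "cd st = X" using st_rec unfolding isrec_def by auto
  have st_z[simp]: "st \<cdot> Pair C p (zz W) = p" if "cd p = X" "dm p = W" for p W
    using st_rec that unfolding isrec_def by auto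
  have st_s[simp]: "st \<cdot> Pair C p (Succ C \<cdot> n) = c2 \<cdot> st \<cdot> Pair C p n"
    if "cd p = X" "cd n = NN" "dm n = dm p" for p n
  proof -
    have "st \<cdot> Pair C p (Succ C \<cdot> n) = (c2 \<cdot> Pi2 C X X) \<cdot> Pair C p (st \<cdot> Pair C p n)"
      using st_rec that unfolding isrec_def by auto
    then show ?thesis using that by simp
  qed
  have st_c2[simp]: "st \<cdot> Pair C (c2 \<cdot> p) n = c2 \<cdot> st \<cdot> Pair C p n"
    if "cd p = X" "cd n = NN" "dm n = dm p" for p n
  proof -
    have "isrec X X c2 (c2 \<cdot> Pi2 C X X) (st \<cdot> cross C X NN (Id C X) (Succ C))"
      unfolding isrec_def by (simp add: cross_def)
    moreover have "isrec X X c2 (c2 \<cdot> Pi2 C X X) (st \<cdot> cross C X NN c2 (Id C NN))"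
      unfolding isrec_def by (simp add: cross_def)
    ultimately have "st \<cdot> cross C X NN c2 (Id C NN) = st \<cdot> cross C X NN (Id C X) (Succ C)"
      by (rule rec_uniq[rotated 4, symmetric]) auto
    then have "(st \<cdot> cross C X NN c2 (Id C NN)) \<cdot> Pair C p n = (st \<cdot> cross C X NN (Id C X) (Succ C)) \<cdot> Pair C p n"
      by simp
    then show ?thesis using that by (simp add: cross_def)
  qed
  define s where "s = curryN C X A (c1 \<cdot> st)"
  have s_t[simp]: "dm s = X" "cd s = Exp C A" by (simp_all add: s_def)
  have sev[simp]: "Ev C A \<cdot> Pair C (s \<cdot> w) j = c1 \<cdot> st \<cdot> Pair C w j"
    if "cd w = X" "dm j = dm w" "cd j = NN" for w j
    using that by (simp add: s_def)
  have S0: "Ev C A \<cdot> Pair C s (zz X) = c1" by (simp add: s_def)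
  have S1: "shift C X A s = s \<cdot> c2"
    by (rule extg[where Z=X and A=A]) auto
  have Ms: "M \<cdot> s = m \<cdot> Pair C c1 (M \<cdot> s \<cdot> c2)"
  proof -
    have "M \<cdot> s = m \<cdot> Pair C (Ev C A \<cdot> Pair C s (zz X)) (M \<cdot> shift C X A s)" by (rule u) simp_all
    then show ?thesis by (simp only: S0 S1)
  qed
  show "\<exists>!u. (dm u = X \<and> cd u = A) \<and> m \<cdot> (cross C A X (Id C A) u \<cdot> c) = u"
  proof (rule ex1I[of _ "M \<cdot> s"])
    have "m \<cdot> (cross C A X (Id C A) (M \<cdot> s) \<cdot> c) = m \<cdot> Pair C c1 (M \<cdot> s \<cdot> c2)"
      using a(1-4) by (simp add: ceq)
    then show "(dm (M \<cdot> s) = X \<and> cd (M \<cdot> s) = A) \<and> m \<cdot> (cross C A X (Id C A) (M \<cdot> s) \<cdot> c) = M \<cdot> s"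
      using Ms a(1-4) by simp
  next
    fix u' assume h: "(dm u' = X \<and> cd u' = A) \<and> m \<cdot> (cross C A X (Id C A) u' \<cdot> c) = u'"
    have ut[simp]: "dm u' = X" "cd u' = A" using h by auto
    have "m \<cdot> (cross C A X (Id C A) u' \<cdot> c) = m \<cdot> Pair C c1 (u' \<cdot> c2)"
      using a(1-4) by (simp add: ceq)
    then have eqU: "m \<cdot> Pair C c1 (u' \<cdot> c2) = u'" using h by simp
    have key: "u' \<cdot> q = m \<cdot> Pair C (c1 \<cdot> q) (u' \<cdot> c2 \<cdot> q)" if "cd q = X" for q
    proof -
      have "u' \<cdot> q = (m \<cdot> Pair C c1 (u' \<cdot> c2)) \<cdot> q" by (simp only: eqU)
      also have "\<dots> = m \<cdot> Pair C (c1 \<cdot> q) (u' \<cdot> c2 \<cdot> q)" using that a(1-4) by simp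
      finally show ?thesis .
    qed
    define y where "y = curryN C X A (u' \<cdot> st)"
    have y_t[simp]: "dm y = X" "cd y = Exp C A" by (simp_all add: y_def)
    have yev[simp]: "Ev C A \<cdot> Pair C (y \<cdot> w) j = u' \<cdot> st \<cdot> Pair C w j"
      if "cd w = X" "dm j = dm w" "cd j = NN" for w j
      using that by (simp add: y_def)
    have "Ev C A \<cdot> Pair C y (zz X) = M \<cdot> s"
    proof (rule can)
      fix w i assume w: "cd w = X" "dm i = dm w" "cd i = NN"
      show "Ev C A \<cdot> Pair C (y \<cdot> w) i = m \<cdot> Pair C (Ev C A \<cdot> Pair C (s \<cdot> w) i) (Ev C A \<cdot> Pair C (y \<cdot> w) (Succ C \<cdot> i))"
        using w key[of "st \<cdot> Pair C w i"] by simp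
    qed simp_all
    moreover have "Ev C A \<cdot> Pair C y (zz X) = u'" by (simp add: y_def)
    ultimately show "u' = M \<cdot> s" by simp
  qed
qed

end


context CC
begin

lemma hom_pres: "dm m = Prod C A A \<Longrightarrow> cd m = A \<Longrightarrow> dm m' = Prod C A' A' \<Longrightarrow> cd m' = A' \<Longrightarrow>
  iterative C A' m' \<Longrightarrow> dm M = Exp C A \<Longrightarrow> cd M = A \<Longrightarrow> unfolding_law C A m M \<Longrightarrow>
  dm M' = Exp C A' \<Longrightarrow> cd M' = A' \<Longrightarrow> unfolding_law C A' m' M' \<Longrightarrow>
  midpoint_hom C A m A' m' f \<Longrightarrow> dm x = Z \<Longrightarrow> cd x = Exp C A \<Longrightarrow>
  f \<cdot> (M \<cdot> x) = M' \<cdot> map_seq C Z A A' f x"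
proof -
  assume a: "dm m = Prod C A A" "cd m = A" "dm m' = Prod C A' A'" "cd m' = A'"
   "iterative C A' m'" "dm M = Exp C A" "cd M = A" "unfolding_law C A m M"
   "dm M' = Exp C A'" "cd M' = A'" "unfolding_law C A' m' M'"
   "midpoint_hom C A m A' m' f" and x: "dm x = Z" "cd x = Exp C A"
  have ft[simp]: "dm f = A" "cd f = A'" using a(12) unfolding midpoint_hom_def hom_iff by auto
  have hl: "f \<cdot> (m \<cdot> Pair C p q) = m' \<cdot> Pair C (f \<cdot> p) (f \<cdot> q)" if "cd p = A" "cd q = A" "dm p = dm q" for p q
  proof -
    have "\<forall>Z x y. x \<in> hom C Z A \<longrightarrow> y \<in> hom C Z A \<longrightarrow>
        f \<cdot> (m \<cdot> Pair C x y) = m' \<cdot> Pair C (f \<cdot> x) (f \<cdot> y)"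
      using a(12) unfolding midpoint_hom_def by blast
    then show ?thesis using that unfolding hom_iff by metis
  qed
  have u': "\<And>Z x. dm x = Z \<Longrightarrow> cd x = Exp C A' \<Longrightarrow> M' \<cdot> x = m' \<cdot> Pair C (Ev C A' \<cdot> Pair C x (zz Z)) (M' \<cdot> shift C Z A' x)"
    using a(11) unfolding unfolding_law_def hom_iff seq_at_def by blast
  have Meq: "m \<cdot> Pair C (hd A) (M \<cdot> sg A) = M"
    using eq_from_unfold[OF a(6,7,1,2,8)] a by simp
  let ?E = "Exp C A"
  define G where "G = map_seq C ?E A A' f (Id C ?E)"
  have Gt[simp]: "dm G = ?E" "cd G = Exp C A'" by (simp_all add: G_def)
  have Gev[simp]: "Ev C A' \<cdot> Pair C (G \<cdot> w) j = f \<cdot> Ev C A \<cdot> Pair C w j"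
    if "cd w = ?E" "dm j = dm w" "cd j = NN" for w j
    using that ev_map[of "Id C ?E" ?E A f A' w j] by (simp add: G_def)
  have G0: "Ev C A' \<cdot> Pair C G (zz ?E) = f \<cdot> hd A"
    using Gev[of "Id C ?E" "zz ?E"] by simp
  have G1: "shift C ?E A' G = G \<cdot> sg A"
    by (rule extg[where Z="?E" and A=A']) auto
  define c where "c = Pair C (f \<cdot> hd A) (sg A)"
  have ct: "dm c = ?E" "cd c = Prod C A' ?E" by (simp_all add: c_def)
  have H1: "m' \<cdot> (cross C A' ?E (Id C A') (f \<cdot> M) \<cdot> c) = f \<cdot> M"
  proof -
    have "m' \<cdot> (cross C A' ?E (Id C A') (f \<cdot> M) \<cdot> c) = m' \<cdot> Pair C (f \<cdot> hd A) (f \<cdot> M \<cdot> sg A)"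
      using a by (simp add: c_def)
    also have "\<dots> = f \<cdot> (m \<cdot> Pair C (hd A) (M \<cdot> sg A))" by (rule hl[symmetric]) (use a in simp_all)
    also have "\<dots> = f \<cdot> M" by (simp only: Meq)
    finally show ?thesis .
  qed
  have H2: "m' \<cdot> (cross C A' ?E (Id C A') (M' \<cdot> G) \<cdot> c) = M' \<cdot> G"
  proof -
    have "m' \<cdot> (cross C A' ?E (Id C A') (M' \<cdot> G) \<cdot> c) = m' \<cdot> Pair C (f \<cdot> hd A) (M' \<cdot> G \<cdot> sg A)"
      using a by (simp add: c_def)
    also have "\<dots> = m' \<cdot> Pair C (Ev C A' \<cdot> Pair C G (zz ?E)) (M' \<cdot> shift C ?E A' G)"
      by (simp only: G0 G1)
    also have "\<dots> = M' \<cdot> G" by (rule u'[symmetric]) simp_all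
    finally show ?thesis .
  qed
  have ex: "\<exists>!u. dm u = ?E \<and> cd u = A' \<and> m' \<cdot> (cross C A' ?E (Id C A') u \<cdot> c) = u"
    by (rule iterE[OF a(5) ct])
  have P1: "dm (f \<cdot> M) = ?E \<and> cd (f \<cdot> M) = A' \<and> m' \<cdot> (cross C A' ?E (Id C A') (f \<cdot> M) \<cdot> c) = f \<cdot> M"
    by (intro conjI H1) (use a in simp_all)
  have P2: "dm (M' \<cdot> G) = ?E \<and> cd (M' \<cdot> G) = A' \<and> m' \<cdot> (cross C A' ?E (Id C A') (M' \<cdot> G) \<cdot> c) = M' \<cdot> G"
    by (intro conjI H2) (use a in simp_all)
  have fe: "f \<cdot> M = M' \<cdot> G" using ex P1 P2 by blast
  have Gx: "G \<cdot> x = map_seq C Z A A' f x"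
    by (rule extg[where Z=Z and A=A']) (use x in auto)
  have "f \<cdot> (M \<cdot> x) = (f \<cdot> M) \<cdot> x" using a x by simp
  also have "\<dots> = (M' \<cdot> G) \<cdot> x" by (simp only: fe)
  also have "\<dots> = M' \<cdot> (G \<cdot> x)" using a x by simp
  finally show ?thesis by (simp only: Gx)
qed

end

theorem mainTheorem1:
  fixes C :: "('o, 'a) ccat"
  assumes "cat_with_exp_pnno C"
  shows "(\<forall>A m. midpoint_obj C A m \<longrightarrow>
            ((iterative C A m \<longleftrightarrow>
               (\<exists>M. M \<in> hom C (Exp C A) A \<and> unfolding_law C A m M \<and> canonicity C A m M)) \<and>
             (iterative C A m \<longrightarrow> (\<exists>!M. M \<in> hom C (Exp C A) A \<and> unfolding_law C A m M))))
       \<and> (\<forall>A m A' m' M M' f.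
            midpoint_obj C A m \<longrightarrow> iterative C A m \<longrightarrow>
            midpoint_obj C A' m' \<longrightarrow> iterative C A' m' \<longrightarrow>
            M \<in> hom C (Exp C A) A \<longrightarrow> unfolding_law C A m M \<longrightarrow>
            M' \<in> hom C (Exp C A') A' \<longrightarrow> unfolding_law C A' m' M' \<longrightarrow>
            midpoint_hom C A m A' m' f \<longrightarrow>
            (\<forall>Z x. x \<in> hom C Z (Exp C A) \<longrightarrow>
               Comp C f (Comp C M x) = Comp C M' (map_seq C Z A A' f x)))"
proof -
  interpret CC C by unfold_locales (rule assms)
  have P1: "(iterative C A m \<longleftrightarrow>
               (\<exists>M. M \<in> hom C (Exp C A) A \<and> unfolding_law C A m M \<and> canonicity C A m M)) \<and>
             (iterative C A m \<longrightarrow> (\<exists>!M. M \<in> hom C (Exp C A) A \<and> unfolding_law C A m M))"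
    if mo: "midpoint_obj C A m" for A m
  proof -
    have mt: "dm m = Prod C A A" "cd m = A" using mo unfolding midpoint_obj_def hom_iff by auto
    have E: "\<exists>M. M \<in> hom C (Exp C A) A \<and> unfolding_law C A m M \<and> canonicity C A m M
             \<and> (\<forall>M'. M' \<in> hom C (Exp C A) A \<and> unfolding_law C A m M' \<longrightarrow> M' = M)"
      if it: "iterative C A m"
    proof -
      obtain M where M: "dm M = Exp C A" "cd M = A"
          "m \<cdot> (cross C A (Exp C A) (Id C A) M \<cdot> Pair C (hd A) (sg A)) = M"
        and un: "\<And>M'. dm M' = Exp C A \<and> cd M' = A \<and> m \<cdot> (cross C A (Exp C A) (Id C A) M' \<cdot> Pair C (hd A) (sg A)) = M' \<Longrightarrow> M' = M"
        using iter_M[OF mt it] by blast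
      have Meq: "m \<cdot> Pair C (hd A) (M \<cdot> sg A) = M" using M mt by simp
      have U: "unfolding_law C A m M" by (rule unfold_from_eq[OF M(1,2) mt Meq])
      have Ca: "canonicity C A m M" by (rule canon[OF M(1,2) mt it U])
      show ?thesis
      proof (intro exI conjI allI impI)
        show "M \<in> hom C (Exp C A) A" using M by (simp add: hom_iff)
        show "unfolding_law C A m M" by (rule U)
        show "canonicity C A m M" by (rule Ca)
        fix M' assume "M' \<in> hom C (Exp C A) A \<and> unfolding_law C A m M'"
        then have "dm M' = Exp C A" "cd M' = A" "unfolding_law C A m M'" by (auto simp: hom_iff)
        then show "M' = M" using un eq_from_unfold[OF _ _ mt] by blast
      qed
    qed
    show ?thesis
    proof (intro conjI iffI impI)
      assume "iterative C A m" then show "\<exists>M. M \<in> hom C (Exp C A) A \<and> unfolding_law C A m M \<and> canonicity C A m M"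
        using E by blast
    next
      assume "\<exists>M. M \<in> hom C (Exp C A) A \<and> unfolding_law C A m M \<and> canonicity C A m M"
      then obtain M where "M \<in> hom C (Exp C A) A" "unfolding_law C A m M" "canonicity C A m M" by blast
      then show "iterative C A m" using conv[OF _ _ mt] by (auto simp: hom_iff)
    next
      assume "iterative C A m" then show "\<exists>!M. M \<in> hom C (Exp C A) A \<and> unfolding_law C A m M"
        using E by blast
    qed
  qed
  have P2: "Comp C f (Comp C M x) = Comp C M' (map_seq C Z A A' f x)"
    if "midpoint_obj C A m" "iterative C A m" "midpoint_obj C A' m'" "iterative C A' m'"
      "M \<in> hom C (Exp C A) A" "unfolding_law C A m M" "M' \<in> hom C (Exp C A') A'" "unfolding_law C A' m' M'"
      "midpoint_hom C A m A' m' f" "x \<in> hom C Z (Exp C A)" for A m A' m' M M' f Z x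
    using that hom_pres[of m A m' A' M M' f x Z] unfolding midpoint_obj_def hom_iff by blast
  show ?thesis using P1 P2 by blast
qed


end
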